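(* Let $m\geq 1$, $n\geq 3$, and let $i,j\in V$. There exists a walk of length $2n-1$ from $i$ to $j$ in $D^m_n$ if and only if there exists a walk of length $n-1$ from $i$ to $j$ in $D^m_n$. In such cases, there are exactly $m$ distinct walks of length $2n-1$ from $i$ to $j$ in $D^m_n$.
   Context: For integers $m\geq 1$, $n\geq 3$, the oriented Dutch windmill graph $D^m_n$ is the directed graph with vertex set $V=\{1,2,\ldots,m(n-1)+1\}$ whose directed edges $(a,b)$ are exactly: $(1,(k-1)(n-1)+2)$ for $k\in\{1,\ldots,m\}$; $((k-1)(n-1)+i,(k-1)(n-1)+i+1)$ for $k\in\{1,\ldots,m\}$ and $i\in\{2,\ldots,n-1\}$; and $((k-1)(n-1)+n,1)$ for $k\in\{1,\ldots,m\}$. A walk is a sequence of vertices $\langle v_1,\ldots,v_r\rangle$ in which each $(v_t,v_{t+1})$ is an edge; its length is $r-1$; walks are distinct when they are distinct sequences. *)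

theory Defs
  imports Main
begin

definition dw_verts :: "nat \<Rightarrow> nat \<Rightarrow> nat set" where
  "dw_verts m n = {1 .. m * (n - 1) + 1}"

definition dw_edge :: "nat \<Rightarrow> nat \<Rightarrow> nat \<Rightarrow> nat \<Rightarrow> bool" where
  "dw_edge m n a b \<longleftrightarrow>
     (\<exists>k\<in>{1..m}. a = 1 \<and> b = (k - 1) * (n - 1) + 2)
   \<or> (\<exists>k\<in>{1..m}. \<exists>i\<in>{2..n - 1}. a = (k - 1) * (n - 1) + i \<and> b = (k - 1) * (n - 1) + i + 1)
   \<or> (\<exists>k\<in>{1..m}. a = (k - 1) * (n - 1) + n \<and> b = 1)"

definition dw_walk :: "nat \<Rightarrow> nat \<Rightarrow> nat list \<Rightarrow> bool" where
  "dw_walk m n w \<longleftrightarrow> w \<noteq> [] \<and> set w \<subseteq> dw_verts m n \<and>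
     (\<forall>t. Suc t < length w \<longrightarrow> dw_edge m n (w ! t) (w ! Suc t))"

definition dw_walks :: "nat \<Rightarrow> nat \<Rightarrow> nat \<Rightarrow> nat \<Rightarrow> nat \<Rightarrow> nat list set" where
  "dw_walks m n r i j = {w. dw_walk m n w \<and> length w = r + 1 \<and> hd w = i \<and> last w = j}"

end

theory Submission
  imports Defs
begin

definition cyc :: "nat \<Rightarrow> nat \<Rightarrow> nat" where "cyc n v = (v - 2) div (n - 1)"
definition pos :: "nat \<Rightarrow> nat \<Rightarrow> nat" where
  "pos n v = (if v = 1 then 0 else (v - 2) mod (n - 1) + 1)"

lemma pos_lt: "n \<ge> 3 \<Longrightarrow> pos n v < n"
proof -
  assume n: "n \<ge> 3"
  then have "(v-2) mod (n-1) < n - 1" by (intro mod_less_divisor) simp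
  note h = this
  show ?thesis
  proof (cases "v = 1")
    case True then show ?thesis using n by (simp add: pos_def)
  next
    case False then have "pos n v = (v-2) mod (n-1) + 1" by (simp add: pos_def)
    with h n show ?thesis by linarith
  qed
qed

lemma pos0: "pos n v = 0 \<longleftrightarrow> v = 1"
  unfolding pos_def by auto

lemma decode:
  assumes "v \<in> dw_verts m n" "v \<noteq> 1" "n \<ge> 3"
  shows "v = cyc n v * (n - 1) + 1 + pos n v"
proof -
  have "v \<ge> 2" using assms by (auto simp: dw_verts_def)
  moreover have "v - 2 = (v-2) div (n-1) * (n-1) + (v-2) mod (n-1)" by (rule div_mult_mod_eq[symmetric])
  moreover have "pos n v = (v-2) mod (n-1) + 1" using assms(2) by (simp add: pos_def)
  ultimately show ?thesis unfolding cyc_def by linarith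
qed

lemma cyc_lt:
  assumes "v \<in> dw_verts m n" "m \<ge> 1" "n \<ge> 3"
  shows "cyc n v < m"
proof -
  have "m * (n - 1) \<ge> 1 * 2" using assms by (intro mult_le_mono) auto
  moreover have "v \<le> m * (n - 1) + 1" using assms by (auto simp: dw_verts_def)
  ultimately have "v - 2 < m * (n - 1)" by linarith
  then show ?thesis unfolding cyc_def
    using less_mult_imp_div_less by blast
qed

lemma modN: "r < (N::nat) \<Longrightarrow> (c * N + r) mod N = r" by (metis mod_less mod_mult_self3)
lemma divN: "r < (N::nat) \<Longrightarrow> (c * N + r) div N = c" by (metis add.commute div_mult_self1 div_less add_0 less_zeroE zero_less_iff_neq_zero gr_implies_not0)

lemma edge_pos:
  assumes "dw_edge m n a b" "n \<ge> 3"
  shows "pos n b = Suc (pos n a) mod n"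
  using assms(1) unfolding dw_edge_def
proof (elim disjE bexE conjE)
  fix k assume "a = 1" "b = (k - 1) * (n - 1) + 2"
  then show ?thesis using assms(2) by (simp add: pos_def)
next
  fix k i assume i: "i \<in> {2..n-1}" and ab: "a = (k - 1) * (n - 1) + i" "b = (k - 1) * (n - 1) + i + 1"
  have e: "a - 2 = (k - 1) * (n - 1) + (i - 2)" "b - 2 = (k - 1) * (n - 1) + (i - 1)" using i ab by auto
  have "a \<noteq> 1" "b \<noteq> 1" using i ab by auto
  moreover have "(a - 2) mod (n-1) = i - 2" unfolding e(1) by (rule modN) (use i in auto)
  moreover have "(b - 2) mod (n-1) = i - 1" unfolding e(2) by (rule modN) (use i in auto)
  ultimately have "pos n a = i - 1" "pos n b = i" using i assms(2) by (auto simp: pos_def)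
  then show ?thesis using i by auto
next
  fix k assume ab: "a = (k - 1) * (n - 1) + n" "b = 1"
  have e: "a - 2 = (k - 1) * (n - 1) + (n - 2)" using ab assms(2) by auto
  have "a \<noteq> 1" using ab assms(2) by auto
  moreover have "(a - 2) mod (n-1) = n - 2" unfolding e by (rule modN) (use assms(2) in auto)
  ultimately have "pos n a = n - 1" using assms(2) by (auto simp: pos_def)
  then show ?thesis using ab assms(2) by (simp add: pos_def)
qed

lemma edge_mid:
  assumes "dw_edge m n a b" "n \<ge> 3" "a \<noteq> 1" "b \<noteq> 1"
  shows "cyc n b = cyc n a \<and> b = Suc a"
  using assms(1) unfolding dw_edge_def
proof (elim disjE bexE conjE)
  fix k assume "a = 1" then show ?thesis using assms by simp
next
  fix k i assume i: "i \<in> {2..n-1}" and ab: "a = (k - 1) * (n - 1) + i" "b = (k - 1) * (n - 1) + i + 1"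
  have e: "a - 2 = (k - 1) * (n - 1) + (i - 2)" "b - 2 = (k - 1) * (n - 1) + (i - 1)" using i ab by auto
  have "cyc n a = k - 1" unfolding cyc_def e(1) by (rule divN) (use i in auto)
  moreover have "cyc n b = k - 1" unfolding cyc_def e(2) by (rule divN) (use i in auto)
  ultimately show ?thesis using ab by simp
next
  fix k assume "b = 1" then show ?thesis using assms by simp
qed

lemma edge_i1: "c < m \<Longrightarrow> n \<ge> 3 \<Longrightarrow> dw_edge m n 1 (c * (n - 1) + 2)"
  unfolding dw_edge_def by (rule disjI1, rule bexI[of _ "c+1"]) auto

lemma edge_i2: "c < m \<Longrightarrow> n \<ge> 3 \<Longrightarrow> 1 \<le> q \<Longrightarrow> q \<le> n - 2 \<Longrightarrow>
   dw_edge m n (c * (n - 1) + 1 + q) (c * (n - 1) + 2 + q)"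
  unfolding dw_edge_def
  by (rule disjI2, rule disjI1, rule bexI[of _ "c+1"], rule bexI[of _ "q+1"]) auto

lemma edge_i3: "c < m \<Longrightarrow> n \<ge> 3 \<Longrightarrow> dw_edge m n (c * (n - 1) + 1 + (n - 1)) 1"
  unfolding dw_edge_def by (rule disjI2, rule disjI2, rule bexI[of _ "c+1"]) auto


lemma walk_pos:
  assumes "dw_walk m n w" "n \<ge> 3" "t < length w"
  shows "pos n (w ! t) = (pos n (w ! 0) + t) mod n"
  using assms(3)
proof (induction t)
  case 0 then show ?case using pos_lt[OF assms(2)] by simp
next
  case (Suc t)
  have "dw_edge m n (w ! t) (w ! Suc t)" using assms(1) Suc.prems by (simp add: dw_walk_def)
  then have "pos n (w ! Suc t) = Suc (pos n (w ! t)) mod n" using edge_pos assms(2) by blast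
  also have "\<dots> = Suc ((pos n (w ! 0) + t) mod n) mod n" using Suc by simp
  also have "\<dots> = (pos n (w ! 0) + Suc t) mod n" by (simp add: mod_Suc_eq)
  finally show ?case .
qed

lemma walk_cyc:
  assumes "dw_walk m n w" "n \<ge> 3" "s \<le> u" "u < length w"
    "\<forall>v. s \<le> v \<and> v \<le> u \<longrightarrow> w ! v \<noteq> 1"
  shows "cyc n (w ! u) = cyc n (w ! s)"
  using assms(3-5)
proof (induction u)
  case 0 then show ?case by simp
next
  case (Suc u)
  show ?case
  proof (cases "s = Suc u")
    case True then show ?thesis by simp
  next
    case False
    then have IH: "cyc n (w ! u) = cyc n (w ! s)" using Suc by auto
    have "dw_edge m n (w ! u) (w ! Suc u)" using assms(1) Suc.prems by (simp add: dw_walk_def)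
    moreover have "w ! u \<noteq> 1" "w ! Suc u \<noteq> 1" using Suc.prems False by auto
    ultimately show ?thesis using edge_mid assms(2) IH by metis
  qed
qed

definition zz :: "nat \<Rightarrow> nat \<Rightarrow> nat" where "zz n i = (n - pos n i) mod n"
definition cc :: "nat \<Rightarrow> nat \<Rightarrow> nat \<Rightarrow> nat \<Rightarrow> nat \<Rightarrow> nat" where
  "cc n i j k t = (if t < zz n i then cyc n i else if t < zz n i + n then k else cyc n j)"
definition fw :: "nat \<Rightarrow> nat \<Rightarrow> nat \<Rightarrow> nat \<Rightarrow> nat \<Rightarrow> nat" where
  "fw n i j k t = (if (pos n i + t) mod n = 0 then 1 else cc n i j k t * (n - 1) + 1 + (pos n i + t) mod n)"

lemma zz_facts:
  assumes "n \<ge> 3"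
  shows "(pos n i + zz n i) mod n = 0" "zz n i < n" "pos n i + zz n i \<le> n"
    "pos n i = 0 \<Longrightarrow> zz n i = 0" "pos n i \<noteq> 0 \<Longrightarrow> pos n i + zz n i = n"
  using pos_lt[OF assms, of i] assms unfolding zz_def by (cases "pos n i = 0"; simp)+

lemma nz: "(Z::nat) mod n = 0 \<Longrightarrow> Z < x \<Longrightarrow> x < Z + n \<Longrightarrow> x mod n \<noteq> 0"
proof -
  assume a: "Z mod n = 0" "Z < x" "x < Z + n"
  have "x mod n = (Z mod n + (x - Z)) mod n" using a(2) mod_add_left_eq[of Z n "x - Z"] by simp
  also have "\<dots> = x - Z" using a by simp
  finally show ?thesis using a by simp
qed


lemma cc_lt:
  assumes "m \<ge> 1" "n \<ge> 3" "i \<in> dw_verts m n" "j \<in> dw_verts m n" "k < m"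
  shows "cc n i j k t < m"
  using cyc_lt[OF assms(3,1,2)] cyc_lt[OF assms(4,1,2)] assms(5) unfolding cc_def by auto

lemma cc_step:
  assumes "n \<ge> 3" "(pos n i + Suc t) mod n \<noteq> 0"
  shows "cc n i j k (Suc t) = cc n i j k t"
proof -
  have "Suc t \<noteq> zz n i" using assms zz_facts(1)[OF assms(1), of i] by metis
  moreover have "Suc t \<noteq> zz n i + n" using assms zz_facts(1)[OF assms(1), of i]
    by (metis add.assoc mod_add_self2)
  ultimately show ?thesis unfolding cc_def by auto
qed

lemma fw_vert:
  assumes "m \<ge> 1" "n \<ge> 3" "i \<in> dw_verts m n" "j \<in> dw_verts m n" "k < m"
  shows "fw n i j k t \<in> dw_verts m n"
proof -
  have c: "cc n i j k t \<le> m - 1" using cc_lt[OF assms, of t] by linarith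
  have "cc n i j k t * (n - 1) \<le> (m - 1) * (n - 1)" using c by (rule mult_le_mono1)
  moreover have "(m - 1) * (n - 1) + (n - 1) = m * (n - 1)" using assms(1)
    by (metis Suc_diff_1 less_le_trans mult_Suc zero_less_one add.commute)
  moreover have "(pos n i + t) mod n < n" using assms(2) by simp
  ultimately have "cc n i j k t * (n - 1) + 1 + (pos n i + t) mod n \<le> m * (n - 1) + 1" by linarith
  note b = this
  have "fw n i j k t \<le> m * (n - 1) + 1 \<and> fw n i j k t \<ge> 1"
  proof (cases "(pos n i + t) mod n = 0")
    case True then show ?thesis unfolding fw_def by simp
  next
    case False then have "fw n i j k t = cc n i j k t * (n - 1) + 1 + (pos n i + t) mod n"
      unfolding fw_def by simp
    with b show ?thesis by linarith
  qed
  then show ?thesis unfolding dw_verts_def by simp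
qed

lemma fw_edge:
  assumes "m \<ge> 1" "n \<ge> 3" "i \<in> dw_verts m n" "j \<in> dw_verts m n" "k < m"
  shows "dw_edge m n (fw n i j k t) (fw n i j k (Suc t))"
proof -
  define q where "q = (pos n i + t) mod n"
  have qn: "q < n" using assms(2) unfolding q_def by simp
  have sq: "(pos n i + Suc t) mod n = (if Suc q = n then 0 else Suc q)"
    unfolding q_def by (simp add: mod_Suc)
  have ct: "cc n i j k t < m" "cc n i j k (Suc t) < m" using cc_lt[OF assms] by auto
  consider "q = 0" | "0 < q" "q < n - 1" | "q = n - 1" using qn by linarith
  then show ?thesis
  proof cases
    case 1
    then have "fw n i j k t = 1" "fw n i j k (Suc t) = cc n i j k (Suc t) * (n - 1) + 2"
      using sq assms(2) unfolding fw_def q_def by auto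
    then show ?thesis using edge_i1[OF ct(2) assms(2)] by simp
  next
    case 2
    then have "cc n i j k (Suc t) = cc n i j k t" using sq by (intro cc_step[OF assms(2)]) auto
    then have "fw n i j k t = cc n i j k t * (n - 1) + 1 + q" "fw n i j k (Suc t) = cc n i j k t * (n - 1) + 2 + q"
      using sq 2 assms(2) unfolding fw_def q_def by auto
    then show ?thesis using edge_i2[OF ct(1) assms(2), of q] 2 by simp
  next
    case 3
    then have "fw n i j k t = cc n i j k t * (n - 1) + 1 + (n - 1)" "fw n i j k (Suc t) = 1"
      using sq assms(2) unfolding fw_def q_def by auto
    then show ?thesis using edge_i3[OF ct(1) assms(2)] by simp
  qed
qed

lemma fw_walk:
  assumes "m \<ge> 1" "n \<ge> 3" "i \<in> dw_verts m n" "j \<in> dw_verts m n" "k < m"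
  shows "dw_walk m n (map (fw n i j k) [0..<L+1])"
  unfolding dw_walk_def using fw_vert[OF assms] fw_edge[OF assms]
  by (auto simp del: upt_Suc simp add: nth_map nth_upt)

lemma fw_hd:
  assumes "n \<ge> 3" "i \<in> dw_verts m n"
  shows "fw n i j k 0 = i"
proof (cases "i = 1")
  case True then show ?thesis by (simp add: fw_def pos_def)
next
  case False
  then have p: "pos n i \<noteq> 0" using pos0 by blast
  then have "zz n i > 0" using zz_facts[OF assms(1), of i] pos_lt[OF assms(1), of i] by auto
  then have "cc n i j k 0 = cyc n i" by (simp add: cc_def)
  then show ?thesis using decode[OF assms(2) False assms(1)] p pos_lt[OF assms(1), of i]
    by (simp add: fw_def)
qed

lemma fw_last:
  assumes "n \<ge> 3" "j \<in> dw_verts m n" "pos n j = (pos n i + L) mod n" "zz n i \<le> L"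
    "L < zz n i + n \<Longrightarrow> k = cyc n j"
  shows "fw n i j k L = j"
proof (cases "j = 1")
  case True then show ?thesis using assms(3) by (simp add: fw_def pos_def)
next
  case False
  then have p: "pos n j \<noteq> 0" using pos0 by blast
  have "cc n i j k L = cyc n j" using assms(4,5) by (auto simp: cc_def)
  then show ?thesis using decode[OF assms(2) False assms(1)] p assms(3)
    by (simp add: fw_def)
qed


lemma walks_pos:
  assumes "w \<in> dw_walks m n L i j" "n \<ge> 3" "t \<le> L"
  shows "pos n (w ! t) = (pos n i + t) mod n"
proof -
  have w: "dw_walk m n w" "length w = L + 1" "hd w = i" using assms(1) by (auto simp: dw_walks_def)
  then have "w ! 0 = i" by (cases w) auto
  then show ?thesis using walk_pos[OF w(1) assms(2)] w(2) assms(3) by simp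
qed

lemma walks_last: "w \<in> dw_walks m n L i j \<Longrightarrow> w ! L = j"
proof -
  assume a: "w \<in> dw_walks m n L i j"
  then have "w \<noteq> []" "length w = L + 1" "last w = j" by (auto simp: dw_walks_def dw_walk_def)
  then show ?thesis by (simp add: last_conv_nth)
qed

lemma walks_nec:
  assumes "w \<in> dw_walks m n L i j" "n \<ge> 3"
  shows "pos n j = (pos n i + L) mod n"
  using walks_pos[OF assms order.refl] walks_last[OF assms(1)] by simp

lemma fw_in:
  assumes "m \<ge> 1" "n \<ge> 3" "i \<in> dw_verts m n" "j \<in> dw_verts m n" "k < m"
    "pos n j = (pos n i + L) mod n" "zz n i \<le> L" "L < zz n i + n \<Longrightarrow> k = cyc n j"
  shows "map (fw n i j k) [0..<L+1] \<in> dw_walks m n L i j"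
  unfolding dw_walks_def using fw_walk[OF assms(1-5)] fw_hd[OF assms(2,3)] fw_last[OF assms(2,4,6-8)]
  by (simp add: hd_map last_map del: upt_Suc)

lemma fw_uniq:
  assumes "m \<ge> 1" "n \<ge> 3" "i \<in> dw_verts m n" "j \<in> dw_verts m n"
    "w \<in> dw_walks m n L i j" "L < zz n i + 2 * n" "zz n i < L"
  shows "w = map (fw n i j (cyc n (w ! (zz n i + 1)))) [0..<L+1]"
proof -
  define k where "k = cyc n (w ! (zz n i + 1))"
  define z where "z = zz n i"
  define Z where "Z = pos n i + z"
  have w: "dw_walk m n w" "length w = L + 1" using assms(5) by (auto simp: dw_walks_def)
  have Z: "Z mod n = 0" "Z \<le> n" "pos n i = 0 \<Longrightarrow> z = 0" using zz_facts[OF assms(2), of i]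
    unfolding Z_def z_def by auto
  have wv: "w ! t \<in> dw_verts m n" if "t \<le> L" for t
    using w that unfolding dw_walk_def by (metis less_Suc_eq_le nth_mem subsetD Suc_eq_plus1)
  have ne1: "w ! t \<noteq> 1" if "t \<le> L" "(pos n i + t) mod n \<noteq> 0" for t
    using walks_pos[OF assms(5,2) that(1)] that(2) pos0 by metis
  have eq: "w ! t = fw n i j k t" if t: "t \<le> L" for t
  proof (cases "(pos n i + t) mod n = 0")
    case True
    then show ?thesis using walks_pos[OF assms(5,2) t] pos0 by (simp add: fw_def)
  next
    case False
    have dec: "w ! t = cyc n (w ! t) * (n - 1) + 1 + (pos n i + t) mod n"
      using decode[OF wv[OF t] ne1[OF t False] assms(2)] walks_pos[OF assms(5,2) t] by simp
    have "cyc n (w ! t) = cc n i j k t"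
    proof -
      consider "t < z" | "z < t" "t < z + n" | "z + n < t" | "t = z" | "t = z + n" by linarith
      then show ?thesis
      proof cases
        case 1
        then have p: "pos n i \<noteq> 0" using Z by auto
        have "cyc n (w ! t) = cyc n (w ! 0)"
        proof (rule walk_cyc[OF w(1) assms(2)])
          show "0 \<le> t" "t < length w" using t w by auto
          show "\<forall>v. 0 \<le> v \<and> v \<le> t \<longrightarrow> w ! v \<noteq> 1"
          proof (intro allI impI)
            fix v assume v: "0 \<le> v \<and> v \<le> t"
            have "pos n i + v < n" using v 1 Z(2) unfolding Z_def by linarith
            then have "(pos n i + v) mod n \<noteq> 0" using p by simp
            then show "w ! v \<noteq> 1" using ne1 v t by auto
          qed
        qed
        moreover have "w ! 0 = i" using assms(5) w(2) by (cases w) (auto simp: dw_walks_def)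
        ultimately show ?thesis using 1 by (simp add: cc_def z_def)
      next
        case 2
        have "cyc n (w ! t) = cyc n (w ! (z + 1))"
        proof (rule walk_cyc[OF w(1) assms(2)])
          show "z + 1 \<le> t" "t < length w" using t w 2 by auto
          show "\<forall>v. z + 1 \<le> v \<and> v \<le> t \<longrightarrow> w ! v \<noteq> 1"
          proof (intro allI impI)
            fix v assume v: "z + 1 \<le> v \<and> v \<le> t"
            have "(pos n i + v) mod n \<noteq> 0" using v 2 by (intro nz[OF Z(1)]) (auto simp: Z_def)
            then show "w ! v \<noteq> 1" using ne1 v t by auto
          qed
        qed
        then show ?thesis using 2 by (simp add: cc_def z_def k_def)
      next
        case 3
        have "cyc n (w ! L) = cyc n (w ! t)"
        proof (rule walk_cyc[OF w(1) assms(2)])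
          show "t \<le> L" "L < length w" using t w by auto
          show "\<forall>v. t \<le> v \<and> v \<le> L \<longrightarrow> w ! v \<noteq> 1"
          proof (intro allI impI)
            fix v assume v: "t \<le> v \<and> v \<le> L"
            have "(Z + n) mod n = 0" using Z(1) by simp
            then have "(pos n i + v) mod n \<noteq> 0" using v 3 assms(6)
              by (intro nz[of "Z + n"]) (auto simp: Z_def z_def)
            then show "w ! v \<noteq> 1" using ne1 v by auto
          qed
        qed
        then show ?thesis using 3 walks_last[OF assms(5)] by (simp add: cc_def z_def)
      next
        case 4
        then show ?thesis using False Z(1) unfolding Z_def by simp
      next
        case 5
        then show ?thesis using False Z(1) unfolding Z_def by (metis add.assoc mod_add_self2)
      qed
    qed
    then show ?thesis using dec False by (simp add: fw_def)
  qed
  show ?thesis unfolding k_def[symmetric]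
    by (rule nth_equalityI) (use w(2) eq in \<open>auto simp del: upt_Suc simp add: nth_map nth_upt\<close>)
qed


theorem lemma2p4:
  fixes m n i j :: nat
  assumes "m \<ge> 1" and "n \<ge> 3"
    and "i \<in> dw_verts m n" and "j \<in> dw_verts m n"
  shows "(dw_walks m n (2 * n - 1) i j \<noteq> {} \<longleftrightarrow> dw_walks m n (n - 1) i j \<noteq> {})
         \<and> (dw_walks m n (2 * n - 1) i j \<noteq> {} \<longrightarrow> card (dw_walks m n (2 * n - 1) i j) = m)"
proof -
  let ?C = "\<lambda>L. pos n j = (pos n i + L) mod n"
  have zl: "zz n i < n" using zz_facts[OF assms(2)] by auto
  have same: "(pos n i + (2 * n - 1)) mod n = (pos n i + (n - 1)) mod n"
  proof -
    have "pos n i + (2 * n - 1) = (pos n i + (n - 1)) + n" using assms(2) by simp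
    then show ?thesis by (metis mod_add_self2)
  qed
  have ex1: "dw_walks m n (n - 1) i j \<noteq> {} \<longleftrightarrow> ?C (n - 1)"
  proof
    assume "dw_walks m n (n - 1) i j \<noteq> {}"
    then obtain w where "w \<in> dw_walks m n (n - 1) i j" by blast
    then show "?C (n - 1)" using walks_nec assms(2) by blast
  next
    assume c: "?C (n - 1)"
    have "map (fw n i j (cyc n j)) [0..<(n-1)+1] \<in> dw_walks m n (n - 1) i j"
      by (rule fw_in[OF assms cyc_lt[OF assms(4,1,2)] c]) (use zl in auto)
    then show "dw_walks m n (n - 1) i j \<noteq> {}" by blast
  qed
  have in2: "map (fw n i j k) [0..<(2 * n - 1)+1] \<in> dw_walks m n (2 * n - 1) i j"
    if "?C (2 * n - 1)" "k < m" for k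
    by (rule fw_in[OF assms that(2) that(1)]) (use zl in auto)
  have ex2: "dw_walks m n (2 * n - 1) i j \<noteq> {} \<longleftrightarrow> ?C (2 * n - 1)"
  proof
    assume "dw_walks m n (2 * n - 1) i j \<noteq> {}"
    then obtain w where "w \<in> dw_walks m n (2 * n - 1) i j" by blast
    then show "?C (2 * n - 1)" using walks_nec assms(2) by blast
  next
    assume c: "?C (2 * n - 1)"
    then show "dw_walks m n (2 * n - 1) i j \<noteq> {}" using in2[OF c, of 0] assms(1) by auto
  qed
  have card: "card (dw_walks m n (2 * n - 1) i j) = m" if c: "?C (2 * n - 1)"
  proof -
    let ?f = "\<lambda>k. map (fw n i j k) [0..<(2 * n - 1)+1]"
    have "dw_walks m n (2 * n - 1) i j = ?f ` {..<m}"
    proof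
      show "?f ` {..<m} \<subseteq> dw_walks m n (2 * n - 1) i j" using in2[OF c] by auto
    next
      show "dw_walks m n (2 * n - 1) i j \<subseteq> ?f ` {..<m}"
      proof
        fix w assume w: "w \<in> dw_walks m n (2 * n - 1) i j"
        have u: "w = ?f (cyc n (w ! (zz n i + 1)))"
          by (rule fw_uniq[OF assms w]) (use zl assms(2) in auto)
        have "w ! (zz n i + 1) \<in> dw_verts m n" using w zl assms(2)
          unfolding dw_walks_def dw_walk_def by (auto intro!: nth_mem)
        then have "cyc n (w ! (zz n i + 1)) < m" using cyc_lt assms by blast
        then show "w \<in> ?f ` {..<m}" using u by blast
      qed
    qed
    moreover have "inj_on ?f {..<m}"
    proof
      fix k1 k2 assume "k1 \<in> {..<m}" "k2 \<in> {..<m}" "?f k1 = ?f k2"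
      then have e: "?f k1 ! (zz n i + 1) = ?f k2 ! (zz n i + 1)" by (simp only:)
      have q: "(pos n i + (zz n i + 1)) mod n = 1"
      proof -
        have "(pos n i + (zz n i + 1)) mod n = Suc ((pos n i + zz n i) mod n) mod n"
          by (simp add: mod_Suc_eq)
        then show ?thesis using zz_facts(1)[OF assms(2), of i] assms(2) by simp
      qed
      have "fw n i j k (zz n i + 1) = k * (n - 1) + 2" for k
        using q assms(2) by (simp add: fw_def cc_def)
      moreover have "?f k ! (zz n i + 1) = fw n i j k (zz n i + 1)" for k
        using zl assms(2) by (simp del: upt_Suc add: nth_map nth_upt)
      ultimately have "k1 * (n - 1) = k2 * (n - 1)" using e by simp
      then show "k1 = k2" using assms(2) by simp
    qed
    ultimately show ?thesis by (simp add: card_image)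
  qed
  show ?thesis using ex1 ex2 same card by auto
qed

end
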